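(* Let $(\mathcal R,\Sigma,\Delta)$ be a right triangulated category with right semi-equivalence and let $(\mathcal U,\mathcal V)$ be a torsion pair in $\mathcal R$. The following are equivalent: (a) $\Sigma\mathcal U\subseteq\mathcal U$; (b) $\Sigma^{-1}\mathcal V\subseteq\mathcal V$, where $\Sigma^{-1}\mathcal V=\{X\in\mathcal R:\Sigma X\in\mathcal V\}$; (c) $\mathcal R(\Sigma\mathcal U,\mathcal V)=0$; (d) $\Sigma$ maps $\mathcal V$-monic morphisms to $\mathcal V$-monic morphisms.
   Context: All categories are additive and idempotent complete. A right triangulated category $(\mathcal R,\Sigma,\Delta)$: additive category, additive endofunctor $\Sigma$, class $\Delta$ of right triangles $A\to B\to C\to\Sigma A$ satisfying the axioms of a triangulated category except that $\Sigma$ need not be an equivalence and only rotation to the right ($B\xrightarrow{y}C\xrightarrow{z}\Sigma A\xrightarrow{-\Sigma x}\Sigma B$) is required. $\Sigma$ is a right semi-equivalence if it is fully faithful and its essential image is closed under extensions in right triangles. A torsion pair in $\mathcal R$ is a pair $(\mathcal U,\mathcal V)$ of additive subcategories (closed under isomorphisms, sums, summands) with $\mathcal R(\mathcal U,\mathcal V)=0$ such that each $C\in\mathcal R$ admits a right triangle $U\to C\to V\to\Sigma U$ with $U\in\mathcal U$, $V\in\mathcal V$. A morphism $f:A\to B$ is $\mathcal V$-monic if every morphism $A\to V$ with $V\in\mathcal V$ factors through $f$. *)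

theory Defs
  imports Main
begin

text \<open>Categories are encoded concretely: objects form the type 'o, morphisms are raw
elements of type 'm, and membership in a hom-set is given by hom A B.
Composition cmp g f means g after f. The additive structure is given per hom-set.\<close>

record ('o,'m) addcat =
  hom  :: "'o \<Rightarrow> 'o \<Rightarrow> 'm set"
  cmp  :: "'m \<Rightarrow> 'm \<Rightarrow> 'm"
  idm  :: "'o \<Rightarrow> 'm"
  madd :: "'m \<Rightarrow> 'm \<Rightarrow> 'm"
  mzero :: "'o \<Rightarrow> 'o \<Rightarrow> 'm"
  mneg :: "'m \<Rightarrow> 'm"

definition is_category :: "('o,'m) addcat \<Rightarrow> bool" where
  "is_category C \<longleftrightarrow>
     (\<forall>A. idm C A \<in> hom C A A) \<and>
     (\<forall>A B D f g. f \<in> hom C A B \<longrightarrow> g \<in> hom C B D \<longrightarrow> cmp C g f \<in> hom C A D) \<and>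
     (\<forall>A B D E f g h. f \<in> hom C A B \<longrightarrow> g \<in> hom C B D \<longrightarrow> h \<in> hom C D E \<longrightarrow>
         cmp C h (cmp C g f) = cmp C (cmp C h g) f) \<and>
     (\<forall>A B f. f \<in> hom C A B \<longrightarrow> cmp C f (idm C A) = f \<and> cmp C (idm C B) f = f)"

definition is_preadditive :: "('o,'m) addcat \<Rightarrow> bool" where
  "is_preadditive C \<longleftrightarrow> is_category C \<and>
     (\<forall>A B. mzero C A B \<in> hom C A B) \<and>
     (\<forall>A B f g. f \<in> hom C A B \<longrightarrow> g \<in> hom C A B \<longrightarrow> madd C f g \<in> hom C A B) \<and>
     (\<forall>A B f. f \<in> hom C A B \<longrightarrow> mneg C f \<in> hom C A B) \<and>
     (\<forall>A B f g h. f \<in> hom C A B \<longrightarrow> g \<in> hom C A B \<longrightarrow> h \<in> hom C A B \<longrightarrow>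
         madd C (madd C f g) h = madd C f (madd C g h)) \<and>
     (\<forall>A B f g. f \<in> hom C A B \<longrightarrow> g \<in> hom C A B \<longrightarrow> madd C f g = madd C g f) \<and>
     (\<forall>A B f. f \<in> hom C A B \<longrightarrow> madd C f (mzero C A B) = f) \<and>
     (\<forall>A B f. f \<in> hom C A B \<longrightarrow> madd C f (mneg C f) = mzero C A B) \<and>
     (\<forall>A B D f g g'. f \<in> hom C A B \<longrightarrow> g \<in> hom C B D \<longrightarrow> g' \<in> hom C B D \<longrightarrow>
         cmp C (madd C g g') f = madd C (cmp C g f) (cmp C g' f)) \<and>
     (\<forall>A B D f f' g. f \<in> hom C A B \<longrightarrow> f' \<in> hom C A B \<longrightarrow> g \<in> hom C B D \<longrightarrow>
         cmp C g (madd C f f') = madd C (cmp C g f) (cmp C g f'))"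

definition is_zero_obj :: "('o,'m) addcat \<Rightarrow> 'o \<Rightarrow> bool" where
  "is_zero_obj C Z \<longleftrightarrow> (\<forall>X. (\<exists>!f. f \<in> hom C Z X) \<and> (\<exists>!f. f \<in> hom C X Z))"

definition is_biproduct :: "('o,'m) addcat \<Rightarrow> 'o \<Rightarrow> 'o \<Rightarrow> 'o \<Rightarrow> bool" where
  "is_biproduct C X Y W \<longleftrightarrow> (\<exists>i1 i2 p1 p2.
     i1 \<in> hom C Y X \<and> i2 \<in> hom C W X \<and> p1 \<in> hom C X Y \<and> p2 \<in> hom C X W \<and>
     cmp C p1 i1 = idm C Y \<and> cmp C p2 i2 = idm C W \<and>
     cmp C p2 i1 = mzero C Y W \<and> cmp C p1 i2 = mzero C W Y \<and>
     madd C (cmp C i1 p1) (cmp C i2 p2) = idm C X)"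

definition is_additive :: "('o,'m) addcat \<Rightarrow> bool" where
  "is_additive C \<longleftrightarrow> is_preadditive C \<and> (\<exists>Z. is_zero_obj C Z) \<and>
     (\<forall>Y W. \<exists>X. is_biproduct C X Y W)"

definition idem_complete :: "('o,'m) addcat \<Rightarrow> bool" where
  "idem_complete C \<longleftrightarrow> (\<forall>A e. e \<in> hom C A A \<longrightarrow> cmp C e e = e \<longrightarrow>
     (\<exists>B r s. r \<in> hom C A B \<and> s \<in> hom C B A \<and> cmp C s r = e \<and> cmp C r s = idm C B))"

definition is_iso :: "('o,'m) addcat \<Rightarrow> 'o \<Rightarrow> 'o \<Rightarrow> 'm \<Rightarrow> bool" where
  "is_iso C A B f \<longleftrightarrow> f \<in> hom C A B \<and>
     (\<exists>g \<in> hom C B A. cmp C g f = idm C A \<and> cmp C f g = idm C B)"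

definition iso_objs :: "('o,'m) addcat \<Rightarrow> 'o \<Rightarrow> 'o \<Rightarrow> bool" where
  "iso_objs C A B \<longleftrightarrow> (\<exists>f. is_iso C A B f)"

definition additive_endofunctor ::
  "('o,'m) addcat \<Rightarrow> ('o \<Rightarrow> 'o) \<Rightarrow> ('m \<Rightarrow> 'm) \<Rightarrow> bool" where
  "additive_endofunctor C So Sm \<longleftrightarrow>
     (\<forall>A B f. f \<in> hom C A B \<longrightarrow> Sm f \<in> hom C (So A) (So B)) \<and>
     (\<forall>A. Sm (idm C A) = idm C (So A)) \<and>
     (\<forall>A B D f g. f \<in> hom C A B \<longrightarrow> g \<in> hom C B D \<longrightarrow> Sm (cmp C g f) = cmp C (Sm g) (Sm f)) \<and>
     (\<forall>A B f g. f \<in> hom C A B \<longrightarrow> g \<in> hom C A B \<longrightarrow> Sm (madd C f g) = madd C (Sm f) (Sm g))"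

text \<open>A right triangle A --x--> B --y--> C --z--> So A is encoded as (A,B,C,x,y,z).\<close>
type_synonym ('o,'m) tri = "'o \<times> 'o \<times> 'o \<times> 'm \<times> 'm \<times> 'm"

definition is_tri :: "('o,'m) addcat \<Rightarrow> ('o \<Rightarrow> 'o) \<Rightarrow> ('o,'m) tri \<Rightarrow> bool" where
  "is_tri C So T \<longleftrightarrow> (case T of (A,B,D,x,y,z) \<Rightarrow>
     x \<in> hom C A B \<and> y \<in> hom C B D \<and> z \<in> hom C D (So A))"

definition tri_iso :: "('o,'m) addcat \<Rightarrow> ('m \<Rightarrow> 'm) \<Rightarrow> ('o,'m) tri \<Rightarrow> ('o,'m) tri \<Rightarrow> bool" where
  "tri_iso C Sm T T' \<longleftrightarrow> (case T of (A,B,D,x,y,z) \<Rightarrow> case T' of (A',B',D',x',y',z') \<Rightarrow>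
     (\<exists>a b c. is_iso C A A' a \<and> is_iso C B B' b \<and> is_iso C D D' c \<and>
        cmp C b x = cmp C x' a \<and> cmp C c y = cmp C y' b \<and> cmp C (Sm a) z = cmp C z' c))"

definition right_triangulated ::
  "('o,'m) addcat \<Rightarrow> ('o \<Rightarrow> 'o) \<Rightarrow> ('m \<Rightarrow> 'm) \<Rightarrow> ('o,'m) tri set \<Rightarrow> bool" where
  "right_triangulated C So Sm \<Delta> \<longleftrightarrow>
     is_additive C \<and> idem_complete C \<and> additive_endofunctor C So Sm \<and>
     (\<forall>T\<in>\<Delta>. is_tri C So T) \<and>
     \<comment> \<open>RT1: closure under isomorphism of triangles\<close>
     (\<forall>T T'. T \<in> \<Delta> \<longrightarrow> is_tri C So T' \<longrightarrow> tri_iso C Sm T T' \<longrightarrow> T' \<in> \<Delta>) \<and>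
     \<comment> \<open>RT1: A --1--> A --> 0 --> So A\<close>
     (\<forall>A Z. is_zero_obj C Z \<longrightarrow> (A, A, Z, idm C A, mzero C A Z, mzero C Z (So A)) \<in> \<Delta>) \<and>
     \<comment> \<open>RT1: every morphism embeds in a right triangle\<close>
     (\<forall>A B x. x \<in> hom C A B \<longrightarrow> (\<exists>D y z. (A, B, D, x, y, z) \<in> \<Delta>)) \<and>
     \<comment> \<open>RT2: rotation to the right\<close>
     (\<forall>A B D x y z. (A, B, D, x, y, z) \<in> \<Delta> \<longrightarrow>
        (B, D, So A, y, z, mneg C (Sm x)) \<in> \<Delta>) \<and>
     \<comment> \<open>RT3: morphisms of triangles\<close>
     (\<forall>A B D x y z A' B' D' x' y' z' a b.
        (A, B, D, x, y, z) \<in> \<Delta> \<longrightarrow> (A', B', D', x', y', z') \<in> \<Delta> \<longrightarrow>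
        a \<in> hom C A A' \<longrightarrow> b \<in> hom C B B' \<longrightarrow> cmp C b x = cmp C x' a \<longrightarrow>
        (\<exists>c \<in> hom C D D'. cmp C c y = cmp C y' b \<and> cmp C (Sm a) z = cmp C z' c)) \<and>
     \<comment> \<open>RT4: octahedral axiom\<close>
     (\<forall>X Y Z Z' X' Y' u j k v l i m n.
        (X, Y, Z', u, j, k) \<in> \<Delta> \<longrightarrow> (Y, Z, X', v, l, i) \<in> \<Delta> \<longrightarrow>
        (X, Z, Y', cmp C v u, m, n) \<in> \<Delta> \<longrightarrow>
        (\<exists>f g. (Z', Y', X', f, g, cmp C (Sm j) i) \<in> \<Delta> \<and>
           cmp C f j = cmp C m v \<and> cmp C n f = k \<and> cmp C g m = l \<and>
           cmp C i g = cmp C (Sm u) n))"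

definition right_semi_equivalence ::
  "('o,'m) addcat \<Rightarrow> ('o \<Rightarrow> 'o) \<Rightarrow> ('m \<Rightarrow> 'm) \<Rightarrow> ('o,'m) tri set \<Rightarrow> bool" where
  "right_semi_equivalence C So Sm \<Delta> \<longleftrightarrow>
     (\<forall>A B. bij_betw Sm (hom C A B) (hom C (So A) (So B))) \<and>
     (\<forall>A B D x y z. (A, B, D, x, y, z) \<in> \<Delta> \<longrightarrow>
        (\<exists>A0. iso_objs C A (So A0)) \<longrightarrow> (\<exists>D0. iso_objs C D (So D0)) \<longrightarrow>
        (\<exists>B0. iso_objs C B (So B0)))"

definition additive_subcat :: "('o,'m) addcat \<Rightarrow> 'o set \<Rightarrow> bool" where
  "additive_subcat C S \<longleftrightarrow>
     (\<exists>Z\<in>S. is_zero_obj C Z) \<and>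
     (\<forall>X Y. X \<in> S \<longrightarrow> iso_objs C X Y \<longrightarrow> Y \<in> S) \<and>
     (\<forall>X Y W. is_biproduct C X Y W \<longrightarrow> Y \<in> S \<longrightarrow> W \<in> S \<longrightarrow> X \<in> S) \<and>
     (\<forall>X Y W. is_biproduct C X Y W \<longrightarrow> X \<in> S \<longrightarrow> Y \<in> S)"

definition hom_vanish :: "('o,'m) addcat \<Rightarrow> 'o set \<Rightarrow> 'o set \<Rightarrow> bool" where
  "hom_vanish C S T \<longleftrightarrow> (\<forall>X\<in>S. \<forall>Y\<in>T. hom C X Y = {mzero C X Y})"

definition torsion_pair ::
  "('o,'m) addcat \<Rightarrow> ('o \<Rightarrow> 'o) \<Rightarrow> ('o,'m) tri set \<Rightarrow> 'o set \<Rightarrow> 'o set \<Rightarrow> bool" where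
  "torsion_pair C So \<Delta> U V \<longleftrightarrow> additive_subcat C U \<and> additive_subcat C V \<and>
     hom_vanish C U V \<and>
     (\<forall>D. \<exists>X Y f g h. X \<in> U \<and> Y \<in> V \<and> (X, D, Y, f, g, h) \<in> \<Delta>)"

definition V_monic :: "('o,'m) addcat \<Rightarrow> 'o set \<Rightarrow> 'o \<Rightarrow> 'o \<Rightarrow> 'm \<Rightarrow> bool" where
  "V_monic C V A B f \<longleftrightarrow> f \<in> hom C A B \<and>
     (\<forall>Y\<in>V. \<forall>g\<in>hom C A Y. \<exists>h\<in>hom C B Y. cmp C h f = g)"

end

theory Submission
  imports Defs
begin


locale padd = fixes C :: "('o,'m) addcat" assumes pa: "is_preadditive C"
begin

lemma id_hom_ax: "\<forall>A. idm C A \<in> hom C A A"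
  using pa unfolding is_preadditive_def is_category_def by (elim conjE) assumption
lemma id_hom: "idm C A \<in> hom C A A"
  using id_hom_ax by blast

lemma comp_hom_ax: "\<forall>A B D f g. f \<in> hom C A B \<longrightarrow> g \<in> hom C B D \<longrightarrow> cmp C g f \<in> hom C A D"
  using pa unfolding is_preadditive_def is_category_def by (elim conjE) assumption
lemma comp_hom: "f \<in> hom C A B \<Longrightarrow> g \<in> hom C B D \<Longrightarrow> cmp C g f \<in> hom C A D"
  using comp_hom_ax by blast

lemma assoc_ax: "\<forall>A B D E f g h. f \<in> hom C A B \<longrightarrow> g \<in> hom C B D \<longrightarrow> h \<in> hom C D E \<longrightarrow> cmp C h (cmp C g f) = cmp C (cmp C h g) f"
  using pa unfolding is_preadditive_def is_category_def by (elim conjE) assumption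
lemma assoc: "f \<in> hom C A B \<Longrightarrow> g \<in> hom C B D \<Longrightarrow> h \<in> hom C D E \<Longrightarrow> cmp C h (cmp C g f) = cmp C (cmp C h g) f"
  using assoc_ax by blast

lemma id_rl_ax: "\<forall>A B f. f \<in> hom C A B \<longrightarrow> cmp C f (idm C A) = f \<and> cmp C (idm C B) f = f"
  using pa unfolding is_preadditive_def is_category_def by (elim conjE) assumption
lemma id_rl: "f \<in> hom C A B \<Longrightarrow> cmp C f (idm C A) = f \<and> cmp C (idm C B) f = f"
  using id_rl_ax by blast

lemma zero_hom_ax: "\<forall>A B. mzero C A B \<in> hom C A B"
  using pa unfolding is_preadditive_def is_category_def by (elim conjE) assumption
lemma zero_hom: "mzero C A B \<in> hom C A B"
  using zero_hom_ax by blast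

lemma add_hom_ax: "\<forall>A B f g. f \<in> hom C A B \<longrightarrow> g \<in> hom C A B \<longrightarrow> madd C f g \<in> hom C A B"
  using pa unfolding is_preadditive_def is_category_def by (elim conjE) assumption
lemma add_hom: "f \<in> hom C A B \<Longrightarrow> g \<in> hom C A B \<Longrightarrow> madd C f g \<in> hom C A B"
  using add_hom_ax by blast

lemma neg_hom_ax: "\<forall>A B f. f \<in> hom C A B \<longrightarrow> mneg C f \<in> hom C A B"
  using pa unfolding is_preadditive_def is_category_def by (elim conjE) assumption
lemma neg_hom: "f \<in> hom C A B \<Longrightarrow> mneg C f \<in> hom C A B"
  using neg_hom_ax by blast

lemma add_assoc_ax: "\<forall>A B f g h. f \<in> hom C A B \<longrightarrow> g \<in> hom C A B \<longrightarrow> h \<in> hom C A B \<longrightarrow> madd C (madd C f g) h = madd C f (madd C g h)"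
  using pa unfolding is_preadditive_def is_category_def by (elim conjE) assumption
lemma add_assoc: "f \<in> hom C A B \<Longrightarrow> g \<in> hom C A B \<Longrightarrow> h \<in> hom C A B \<Longrightarrow> madd C (madd C f g) h = madd C f (madd C g h)"
  using add_assoc_ax by blast

lemma add_comm_ax: "\<forall>A B f g. f \<in> hom C A B \<longrightarrow> g \<in> hom C A B \<longrightarrow> madd C f g = madd C g f"
  using pa unfolding is_preadditive_def is_category_def by (elim conjE) assumption
lemma add_comm: "f \<in> hom C A B \<Longrightarrow> g \<in> hom C A B \<Longrightarrow> madd C f g = madd C g f"
  using add_comm_ax by blast

lemma add_zero_ax: "\<forall>A B f. f \<in> hom C A B \<longrightarrow> madd C f (mzero C A B) = f"
  using pa unfolding is_preadditive_def is_category_def by (elim conjE) assumption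
lemma add_zero: "f \<in> hom C A B \<Longrightarrow> madd C f (mzero C A B) = f"
  using add_zero_ax by blast

lemma add_neg_ax: "\<forall>A B f. f \<in> hom C A B \<longrightarrow> madd C f (mneg C f) = mzero C A B"
  using pa unfolding is_preadditive_def is_category_def by (elim conjE) assumption
lemma add_neg: "f \<in> hom C A B \<Longrightarrow> madd C f (mneg C f) = mzero C A B"
  using add_neg_ax by blast

lemma distr_l_ax: "\<forall>A B D f g g'. f \<in> hom C A B \<longrightarrow> g \<in> hom C B D \<longrightarrow> g' \<in> hom C B D \<longrightarrow> cmp C (madd C g g') f = madd C (cmp C g f) (cmp C g' f)"
  using pa unfolding is_preadditive_def is_category_def by (elim conjE) assumption
lemma distr_l: "f \<in> hom C A B \<Longrightarrow> g \<in> hom C B D \<Longrightarrow> g' \<in> hom C B D \<Longrightarrow> cmp C (madd C g g') f = madd C (cmp C g f) (cmp C g' f)"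
  using distr_l_ax by blast

lemma distr_r_ax: "\<forall>A B D f f' g. f \<in> hom C A B \<longrightarrow> f' \<in> hom C A B \<longrightarrow> g \<in> hom C B D \<longrightarrow> cmp C g (madd C f f') = madd C (cmp C g f) (cmp C g f')"
  using pa unfolding is_preadditive_def is_category_def by (elim conjE) assumption
lemma distr_r: "f \<in> hom C A B \<Longrightarrow> f' \<in> hom C A B \<Longrightarrow> g \<in> hom C B D \<Longrightarrow> cmp C g (madd C f f') = madd C (cmp C g f) (cmp C g f')"
  using distr_r_ax by blast

lemma id_r: "f \<in> hom C A B \<Longrightarrow> cmp C f (idm C A) = f" using id_rl by blast
lemma id_l: "f \<in> hom C A B \<Longrightarrow> cmp C (idm C B) f = f" using id_rl by blast

lemma zero_add: "a \<in> hom C A B \<Longrightarrow> madd C (mzero C A B) a = a"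
  using add_comm[OF zero_hom] add_zero by simp

lemma neg_unique:
  assumes a: "a \<in> hom C A B" and b: "b \<in> hom C A B" and e: "madd C a b = mzero C A B"
  shows "b = mneg C a"
proof -
  have na: "mneg C a \<in> hom C A B" using neg_hom[OF a] .
  have "b = madd C b (madd C a (mneg C a))" using add_neg[OF a] add_zero[OF b] by simp
  also have "\<dots> = madd C (madd C b a) (mneg C a)" using add_assoc[OF b a na] by simp
  also have "\<dots> = madd C (madd C a b) (mneg C a)" using add_comm[OF a b] by simp
  also have "\<dots> = mneg C a" using e zero_add[OF na] by simp
  finally show ?thesis .
qed

lemma idem_zero:
  assumes x: "x \<in> hom C A B" and e: "madd C x x = x"
  shows "x = mzero C A B"
proof -
  have nx: "mneg C x \<in> hom C A B" using neg_hom[OF x] .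
  have "x = madd C x (madd C x (mneg C x))" using add_neg[OF x] add_zero[OF x] by simp
  also have "\<dots> = madd C (madd C x x) (mneg C x)" using add_assoc[OF x x nx] by simp
  also have "\<dots> = mzero C A B" using e add_neg[OF x] by simp
  finally show ?thesis .
qed

lemma comp_zero_r: assumes g: "g \<in> hom C B D" shows "cmp C g (mzero C A B) = mzero C A D"
proof -
  have m: "mzero C A B \<in> hom C A B" by (rule zero_hom)
  have "madd C (cmp C g (mzero C A B)) (cmp C g (mzero C A B)) = cmp C g (madd C (mzero C A B) (mzero C A B))"
    using distr_r[OF m m g] by simp
  also have "\<dots> = cmp C g (mzero C A B)" using add_zero[OF m] by simp
  finally show ?thesis using idem_zero[OF comp_hom[OF m g]] by simp
qed
lemma comp_zero_l: assumes f: "f \<in> hom C A B" shows "cmp C (mzero C B D) f = mzero C A D"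
proof -
  have m: "mzero C B D \<in> hom C B D" by (rule zero_hom)
  have "madd C (cmp C (mzero C B D) f) (cmp C (mzero C B D) f) = cmp C (madd C (mzero C B D) (mzero C B D)) f"
    using distr_l[OF f m m] by simp
  also have "\<dots> = cmp C (mzero C B D) f" using add_zero[OF m] by simp
  finally show ?thesis using idem_zero[OF comp_hom[OF f m]] by simp
qed
lemma neg_zero: "mneg C (mzero C A B) = mzero C A B"
  using neg_unique[OF zero_hom zero_hom add_zero[OF zero_hom]] by simp
lemma comp_neg_r: assumes f: "f \<in> hom C A B" and g: "g \<in> hom C B D"
  shows "cmp C g (mneg C f) = mneg C (cmp C g f)"
proof (rule neg_unique)
  show "cmp C g f \<in> hom C A D" by (rule comp_hom[OF f g])
  show "cmp C g (mneg C f) \<in> hom C A D" by (rule comp_hom[OF neg_hom[OF f] g])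
  have "madd C (cmp C g f) (cmp C g (mneg C f)) = cmp C g (madd C f (mneg C f))"
    using distr_r[OF f neg_hom[OF f] g] by simp
  also have "\<dots> = mzero C A D" using add_neg[OF f] comp_zero_r[OF g] by simp
  finally show "madd C (cmp C g f) (cmp C g (mneg C f)) = mzero C A D" .
qed
lemma comp_neg_l: assumes f: "f \<in> hom C A B" and g: "g \<in> hom C B D"
  shows "cmp C (mneg C g) f = mneg C (cmp C g f)"
proof (rule neg_unique)
  show "cmp C g f \<in> hom C A D" by (rule comp_hom[OF f g])
  show "cmp C (mneg C g) f \<in> hom C A D" by (rule comp_hom[OF f neg_hom[OF g]])
  have "madd C (cmp C g f) (cmp C (mneg C g) f) = cmp C (madd C g (mneg C g)) f"
    using distr_l[OF f g neg_hom[OF g]] by simp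
  also have "\<dots> = mzero C A D" using add_neg[OF g] comp_zero_l[OF f] by simp
  finally show "madd C (cmp C g f) (cmp C (mneg C g) f) = mzero C A D" .
qed
lemma neg_neg: assumes f: "f \<in> hom C A B" shows "mneg C (mneg C f) = f"
proof -
  have "madd C (mneg C f) f = mzero C A B" using add_comm[OF neg_hom[OF f] f] add_neg[OF f] by simp
  from neg_unique[OF neg_hom[OF f] f this] show ?thesis by simp
qed

lemma zero_obj_from: "is_zero_obj C Z \<Longrightarrow> f \<in> hom C Z X \<Longrightarrow> f = mzero C Z X"
  unfolding is_zero_obj_def using zero_hom by blast
lemma zero_obj_to: "is_zero_obj C Z \<Longrightarrow> f \<in> hom C X Z \<Longrightarrow> f = mzero C X Z"
  unfolding is_zero_obj_def using zero_hom by blast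

end


locale rtri = padd C for C :: "('o,'m) addcat" +
  fixes So :: "'o \<Rightarrow> 'o" and Sm :: "'m \<Rightarrow> 'm" and \<Delta> :: "('o,'m) tri set"
  assumes rt: "right_triangulated C So Sm \<Delta>"
    and ff: "\<forall>A B. bij_betw Sm (hom C A B) (hom C (So A) (So B))"
begin

lemma additive: "is_additive C"
  using rt unfolding right_triangulated_def by (elim conjE) assumption
lemma idem: "idem_complete C"
  using rt unfolding right_triangulated_def by (elim conjE) assumption
lemma Sm_hom_ax: "\<forall>A B f. f \<in> hom C A B \<longrightarrow> Sm f \<in> hom C (So A) (So B)"
  using rt unfolding right_triangulated_def additive_endofunctor_def by (elim conjE) assumption
lemma Sm_id_ax: "\<forall>A. Sm (idm C A) = idm C (So A)"
  using rt unfolding right_triangulated_def additive_endofunctor_def by (elim conjE) assumption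
lemma Sm_comp_ax: "\<forall>A B D f g. f \<in> hom C A B \<longrightarrow> g \<in> hom C B D \<longrightarrow> Sm (cmp C g f) = cmp C (Sm g) (Sm f)"
  using rt unfolding right_triangulated_def additive_endofunctor_def by (elim conjE) assumption
lemma Sm_add_ax: "\<forall>A B f g. f \<in> hom C A B \<longrightarrow> g \<in> hom C A B \<longrightarrow> Sm (madd C f g) = madd C (Sm f) (Sm g)"
  using rt unfolding right_triangulated_def additive_endofunctor_def by (elim conjE) assumption
lemma tri_ax: "\<forall>T\<in>\<Delta>. is_tri C So T"
  using rt unfolding right_triangulated_def by (elim conjE) assumption
lemma unit_ax: "\<forall>A Z. is_zero_obj C Z \<longrightarrow> (A, A, Z, idm C A, mzero C A Z, mzero C Z (So A)) \<in> \<Delta>"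
  using rt unfolding right_triangulated_def by (elim conjE) assumption
lemma rot_ax: "\<forall>A B D x y z. (A, B, D, x, y, z) \<in> \<Delta> \<longrightarrow>
        (B, D, So A, y, z, mneg C (Sm x)) \<in> \<Delta>"
  using rt unfolding right_triangulated_def by (elim conjE) assumption
lemma morph_ax: "\<forall>A B D x y z A' B' D' x' y' z' a b.
        (A, B, D, x, y, z) \<in> \<Delta> \<longrightarrow> (A', B', D', x', y', z') \<in> \<Delta> \<longrightarrow>
        a \<in> hom C A A' \<longrightarrow> b \<in> hom C B B' \<longrightarrow> cmp C b x = cmp C x' a \<longrightarrow>
        (\<exists>c \<in> hom C D D'. cmp C c y = cmp C y' b \<and> cmp C (Sm a) z = cmp C z' c)"
  using rt unfolding right_triangulated_def by (elim conjE) assumption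

lemma Sm_hom: "f \<in> hom C A B \<Longrightarrow> Sm f \<in> hom C (So A) (So B)"
  using Sm_hom_ax by blast
lemma Sm_id: "Sm (idm C A) = idm C (So A)"
  using Sm_id_ax by blast
lemma Sm_comp: "f \<in> hom C A B \<Longrightarrow> g \<in> hom C B D \<Longrightarrow> Sm (cmp C g f) = cmp C (Sm g) (Sm f)"
  using Sm_comp_ax by blast
lemma Sm_add: "f \<in> hom C A B \<Longrightarrow> g \<in> hom C A B \<Longrightarrow> Sm (madd C f g) = madd C (Sm f) (Sm g)"
  using Sm_add_ax by blast
lemma zero_ex: "\<exists>Z. is_zero_obj C Z"
  using additive unfolding is_additive_def by blast
lemma tri_homs: "(A, B, D, x, y, z) \<in> \<Delta> \<Longrightarrow> x \<in> hom C A B \<and> y \<in> hom C B D \<and> z \<in> hom C D (So A)"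
  using tri_ax unfolding is_tri_def by fastforce
lemma unit: "is_zero_obj C Z \<Longrightarrow> (A, A, Z, idm C A, mzero C A Z, mzero C Z (So A)) \<in> \<Delta>"
  using unit_ax by blast
lemma rot: "(A, B, D, x, y, z) \<in> \<Delta> \<Longrightarrow> (B, D, So A, y, z, mneg C (Sm x)) \<in> \<Delta>"
  using rot_ax by blast
lemma rot3: "(A, B, D, x, y, z) \<in> \<Delta> \<Longrightarrow>
   (So A, So B, So D, mneg C (Sm x), mneg C (Sm y), mneg C (Sm z)) \<in> \<Delta>"
  by (intro rot)
lemma morph: "(A, B, D, x, y, z) \<in> \<Delta> \<Longrightarrow> (A', B', D', x', y', z') \<in> \<Delta> \<Longrightarrow>
        a \<in> hom C A A' \<Longrightarrow> b \<in> hom C B B' \<Longrightarrow> cmp C b x = cmp C x' a \<Longrightarrow>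
        (\<exists>c \<in> hom C D D'. cmp C c y = cmp C y' b \<and> cmp C (Sm a) z = cmp C z' c)"
  by (rule morph_ax[rule_format])

lemma Sm_zero: "Sm (mzero C A B) = mzero C (So A) (So B)"
proof -
  have m: "mzero C A B \<in> hom C A B" by (rule zero_hom)
  have "madd C (Sm (mzero C A B)) (Sm (mzero C A B)) = Sm (mzero C A B)"
    using Sm_add[OF m m] add_zero[OF m] by simp
  thus ?thesis using idem_zero[OF Sm_hom[OF m]] by simp
qed
lemma Sm_neg: assumes f: "f \<in> hom C A B" shows "Sm (mneg C f) = mneg C (Sm f)"
proof (rule neg_unique)
  show "Sm f \<in> hom C (So A) (So B)" by (rule Sm_hom[OF f])
  show "Sm (mneg C f) \<in> hom C (So A) (So B)" by (rule Sm_hom[OF neg_hom[OF f]])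
  show "madd C (Sm f) (Sm (mneg C f)) = mzero C (So A) (So B)"
    using Sm_add[OF f neg_hom[OF f]] add_neg[OF f] Sm_zero by simp
qed
lemma Sm_inj: "f \<in> hom C A B \<Longrightarrow> g \<in> hom C A B \<Longrightarrow> Sm f = Sm g \<Longrightarrow> f = g"
  using ff bij_betw_imp_inj_on inj_onD by metis
lemma Sm_surj: "c \<in> hom C (So A) (So B) \<Longrightarrow> \<exists>f\<in>hom C A B. c = Sm f"
  using ff bij_betw_imp_surj_on by (metis imageE)

lemma CovEx:
  assumes T: "(A, B, D, x, y, z) \<in> \<Delta>" and g: "g \<in> hom C W B"
    and yg: "cmp C y g = mzero C W D"
  shows "\<exists>s\<in>hom C W A. cmp C x s = g"
proof -
  obtain Z where Z: "is_zero_obj C Z" using zero_ex by blast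
  have xh: "x \<in> hom C A B" and yh: "y \<in> hom C B D" and zh: "z \<in> hom C D (So A)"
    using tri_homs[OF T] by auto
  have U: "(W, Z, So W, mzero C W Z, mzero C Z (So W), mneg C (Sm (idm C W))) \<in> \<Delta>"
    using rot[OF unit[OF Z]] .
  have T1: "(B, D, So A, y, z, mneg C (Sm x)) \<in> \<Delta>" using rot[OF T] .
  have b: "mzero C Z D \<in> hom C Z D" by (rule zero_hom)
  have comm: "cmp C (mzero C Z D) (mzero C W Z) = cmp C y g"
    using comp_zero_l[OF zero_hom] yg by simp
  obtain c where c: "c \<in> hom C (So W) (So A)"
    and c2: "cmp C (Sm g) (mneg C (Sm (idm C W))) = cmp C (mneg C (Sm x)) c"
    using morph[OF U T1 g b comm] by blast
  have Sg: "Sm g \<in> hom C (So W) (So B)" by (rule Sm_hom[OF g])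
  have Sx: "Sm x \<in> hom C (So A) (So B)" by (rule Sm_hom[OF xh])
  have "cmp C (Sm g) (mneg C (Sm (idm C W))) = mneg C (Sm g)"
    using comp_neg_r[OF id_hom Sg] id_r[OF Sg] Sm_id by simp
  moreover have "cmp C (mneg C (Sm x)) c = mneg C (cmp C (Sm x) c)"
    using comp_neg_l[OF c Sx] .
  ultimately have "mneg C (Sm g) = mneg C (cmp C (Sm x) c)" using c2 by simp
  hence e: "Sm g = cmp C (Sm x) c"
    using neg_neg[OF Sg] neg_neg[OF comp_hom[OF c Sx]] by metis
  obtain s where s: "s \<in> hom C W A" and cs: "c = Sm s" using Sm_surj[OF c] by blast
  have "Sm g = Sm (cmp C x s)" using e cs Sm_comp[OF s xh] by simp
  hence "g = cmp C x s" using Sm_inj[OF g comp_hom[OF s xh]] by simp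
  thus ?thesis using s by blast
qed

lemma ContraEx:
  assumes T: "(A, B, D, x, y, z) \<in> \<Delta>" and g: "g \<in> hom C B W"
    and gx: "cmp C g x = mzero C A W"
  shows "\<exists>c\<in>hom C D W. cmp C c y = g"
proof -
  obtain Z where Z: "is_zero_obj C Z" using zero_ex by blast
  have xh: "x \<in> hom C A B" and yh: "y \<in> hom C B D" and zh: "z \<in> hom C D (So A)"
    using tri_homs[OF T] by auto
  have U: "(Z, So W, So W, mzero C Z (So W), mneg C (Sm (idm C W)), mneg C (Sm (mzero C W Z))) \<in> \<Delta>"
    using rot[OF rot[OF unit[OF Z]]] .
  have T3: "(So A, So B, So D, mneg C (Sm x), mneg C (Sm y), mneg C (Sm z)) \<in> \<Delta>"
    using rot3[OF T] .
  have a: "mzero C (So A) Z \<in> hom C (So A) Z" by (rule zero_hom)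
  have Sg: "Sm g \<in> hom C (So B) (So W)" by (rule Sm_hom[OF g])
  have Sx: "Sm x \<in> hom C (So A) (So B)" by (rule Sm_hom[OF xh])
  have Sy: "Sm y \<in> hom C (So B) (So D)" by (rule Sm_hom[OF yh])
  have "cmp C (Sm g) (mneg C (Sm x)) = mneg C (cmp C (Sm g) (Sm x))"
    using comp_neg_r[OF Sx Sg] .
  also have "\<dots> = mneg C (Sm (mzero C A W))" using Sm_comp[OF xh g] gx by simp
  also have "\<dots> = mzero C (So A) (So W)" using Sm_zero neg_zero by simp
  also have "\<dots> = cmp C (mzero C Z (So W)) (mzero C (So A) Z)" using comp_zero_l[OF a] by simp
  finally have comm: "cmp C (Sm g) (mneg C (Sm x)) = cmp C (mzero C Z (So W)) (mzero C (So A) Z)" .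
  obtain c where c: "c \<in> hom C (So D) (So W)"
    and c1: "cmp C c (mneg C (Sm y)) = cmp C (mneg C (Sm (idm C W))) (Sm g)"
    using morph[OF T3 U a Sg comm] by blast
  have "cmp C c (mneg C (Sm y)) = mneg C (cmp C c (Sm y))" using comp_neg_r[OF Sy c] .
  moreover have "cmp C (mneg C (Sm (idm C W))) (Sm g) = mneg C (Sm g)"
    using comp_neg_l[OF Sg id_hom] id_l[OF Sg] Sm_id by simp
  ultimately have "mneg C (cmp C c (Sm y)) = mneg C (Sm g)" using c1 by simp
  hence e: "cmp C c (Sm y) = Sm g"
    using neg_neg[OF Sg] neg_neg[OF comp_hom[OF Sy c]] by metis
  obtain c0 where c0: "c0 \<in> hom C D W" and cs: "c = Sm c0" using Sm_surj[OF c] by blast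
  have "Sm (cmp C c0 y) = Sm g" using e cs Sm_comp[OF yh c0] by simp
  hence "cmp C c0 y = g" using Sm_inj[OF comp_hom[OF yh c0] g] by simp
  thus ?thesis using c0 by blast
qed

end


context rtri
begin

lemma retract:
  assumes S: "additive_subcat C S" and X: "X \<in> S" and s: "s \<in> hom C Y X"
    and r: "r \<in> hom C X Y" and rs: "cmp C r s = idm C Y"
  shows "Y \<in> S"
proof -
  define sr where "sr = cmp C s r"
  have srh: "sr \<in> hom C X X" unfolding sr_def by (rule comp_hom[OF r s])
  define e where "e = madd C (idm C X) (mneg C sr)"
  have nsr: "mneg C sr \<in> hom C X X" by (rule neg_hom[OF srh])
  have eh: "e \<in> hom C X X" unfolding e_def by (rule add_hom[OF id_hom nsr])
  have rsr: "cmp C r sr = r" unfolding sr_def using assoc[OF r s r] rs id_l[OF r] by simp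
  have srs: "cmp C sr s = s" unfolding sr_def using assoc[OF s r s] rs id_r[OF s] by simp
  have srsr: "cmp C sr sr = sr"
    unfolding sr_def using assoc[OF comp_hom[OF r s] r s] rsr[unfolded sr_def] by simp
  have sre: "cmp C sr e = mzero C X X"
    unfolding e_def using distr_r[OF id_hom nsr srh] id_r[OF srh] comp_neg_r[OF srh srh] srsr add_neg[OF srh]
    by simp
  have ee: "cmp C e e = e"
  proof -
    have "cmp C e e = madd C (cmp C (idm C X) e) (cmp C (mneg C sr) e)"
      unfolding e_def[of] using distr_l[OF eh id_hom nsr] e_def by simp
    also have "\<dots> = madd C e (mneg C (cmp C sr e))" using id_l[OF eh] comp_neg_l[OF eh srh] by simp
    also have "\<dots> = e" using sre neg_zero add_zero[OF eh] by simp
    finally show ?thesis .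
  qed
  obtain W r' s' where r': "r' \<in> hom C X W" and s': "s' \<in> hom C W X"
    and sr': "cmp C s' r' = e" and rs': "cmp C r' s' = idm C W"
    using idem eh ee unfolding idem_complete_def by blast
  have es: "cmp C e s = mzero C Y X"
    unfolding e_def using distr_l[OF s id_hom nsr] id_l[OF s] comp_neg_l[OF s srh] srs add_neg[OF s]
    by simp
  have re: "cmp C r e = mzero C X Y"
    unfolding e_def using distr_r[OF id_hom nsr r] id_r[OF r] comp_neg_r[OF srh r] rsr add_neg[OF r]
    by simp
  have r'e: "cmp C r' e = r'" using sr' assoc[OF r' s' r'] rs' id_l[OF r'] by simp
  have es': "cmp C e s' = s'" using sr' assoc[OF s' r' s'] rs' id_r[OF s'] by simp
  have p2i1: "cmp C r' s = mzero C Y W"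
  proof -
    have "cmp C r' s = cmp C (cmp C r' e) s" using r'e by simp
    also have "\<dots> = cmp C r' (cmp C e s)" using assoc[OF s eh r'] by simp
    also have "\<dots> = mzero C Y W" using es comp_zero_r[OF r'] by simp
    finally show ?thesis .
  qed
  have p1i2: "cmp C r s' = mzero C W Y"
  proof -
    have "cmp C r s' = cmp C r (cmp C e s')" using es' by simp
    also have "\<dots> = cmp C (cmp C r e) s'" using assoc[OF s' eh r] by simp
    also have "\<dots> = mzero C W Y" using re comp_zero_l[OF s'] by simp
    finally show ?thesis .
  qed
  have sum: "madd C (cmp C s r) (cmp C s' r') = idm C X"
  proof -
    have "madd C (cmp C s r) (cmp C s' r') = madd C sr (madd C (idm C X) (mneg C sr))"
      using sr' e_def sr_def by simp
    also have "\<dots> = madd C (madd C sr (idm C X)) (mneg C sr)" using add_assoc[OF srh id_hom nsr] by simp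
    also have "\<dots> = madd C (madd C (idm C X) sr) (mneg C sr)" using add_comm[OF srh id_hom] by simp
    also have "\<dots> = madd C (idm C X) (madd C sr (mneg C sr))" using add_assoc[OF id_hom srh nsr] by simp
    also have "\<dots> = idm C X" using add_neg[OF srh] add_zero[OF id_hom] by simp
    finally show ?thesis .
  qed
  have "is_biproduct C X Y W"
    unfolding is_biproduct_def using s s' r r' rs rs' p2i1 p1i2 sum by blast
  thus ?thesis using S X unfolding additive_subcat_def by blast
qed

lemma iso_refl: "iso_objs C A A"
  unfolding iso_objs_def is_iso_def using id_hom id_r[OF id_hom] by blast

lemma main:
  assumes ext: "\<forall>A B D x y z. (A, B, D, x, y, z) \<in> \<Delta> \<longrightarrow>
        (\<exists>A0. iso_objs C A (So A0)) \<longrightarrow> (\<exists>D0. iso_objs C D (So D0)) \<longrightarrow>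
        (\<exists>B0. iso_objs C B (So B0))"
    and tp: "torsion_pair C So \<Delta> U V"
  shows "((\<forall>X\<in>U. So X \<in> U) \<longleftrightarrow> (\<forall>X. So X \<in> V \<longrightarrow> X \<in> V))
       \<and> ((\<forall>X. So X \<in> V \<longrightarrow> X \<in> V) \<longleftrightarrow> hom_vanish C (So ` U) V)
       \<and> (hom_vanish C (So ` U) V \<longleftrightarrow>
            (\<forall>A B f. V_monic C V A B f \<longrightarrow> V_monic C V (So A) (So B) (Sm f)))"
proof -
  have addU: "additive_subcat C U" and addV: "additive_subcat C V" and hv: "hom_vanish C U V"
    and tt: "\<forall>D. \<exists>X Y f g h. X \<in> U \<and> Y \<in> V \<and> (X, D, Y, f, g, h) \<in> \<Delta>"
    using tp unfolding torsion_pair_def by auto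
  have hvD: "\<And>X Y f. X \<in> U \<Longrightarrow> Y \<in> V \<Longrightarrow> f \<in> hom C X Y \<Longrightarrow> f = mzero C X Y"
    using hv unfolding hom_vanish_def by blast
  have Viso: "\<And>X Y. X \<in> V \<Longrightarrow> iso_objs C X Y \<Longrightarrow> Y \<in> V"
    using addV unfolding additive_subcat_def by blast
  have F1: "Y \<in> V" if H: "\<forall>X\<in>U. \<forall>f\<in>hom C X Y. f = mzero C X Y" for Y
  proof -
    obtain X0 Y0 f g h where X0: "X0 \<in> U" and Y0: "Y0 \<in> V" and T: "(X0, Y, Y0, f, g, h) \<in> \<Delta>"
      using tt by blast
    have fh: "f \<in> hom C X0 Y" and gh: "g \<in> hom C Y Y0" using tri_homs[OF T] by auto
    have "cmp C (idm C Y) f = mzero C X0 Y" using id_l[OF fh] H X0 fh by simp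
    then obtain r where r: "r \<in> hom C Y0 Y" and rg: "cmp C r g = idm C Y"
      using ContraEx[OF T id_hom] by blast
    show ?thesis by (rule retract[OF addV Y0 gh r rg])
  qed
  have ac: "hom_vanish C (So ` U) V" if a: "\<forall>X\<in>U. So X \<in> U"
    using a hv unfolding hom_vanish_def by blast
  have cb: "\<forall>X. So X \<in> V \<longrightarrow> X \<in> V" if c: "hom_vanish C (So ` U) V"
  proof (intro allI impI)
    fix X assume SX: "So X \<in> V"
    show "X \<in> V"
    proof (rule F1, intro ballI)
      fix u f assume u: "u \<in> U" and f: "f \<in> hom C u X"
      have "Sm f \<in> hom C (So u) (So X)" by (rule Sm_hom[OF f])
      hence "Sm f = mzero C (So u) (So X)" using c u SX unfolding hom_vanish_def by blast
      hence "Sm f = Sm (mzero C u X)" using Sm_zero by simp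
      thus "f = mzero C u X" using Sm_inj[OF f zero_hom] by simp
    qed
  qed
  have ba: "\<forall>X\<in>U. So X \<in> U" if b: "\<forall>X. So X \<in> V \<longrightarrow> X \<in> V"
  proof
    fix u assume u: "u \<in> U"
    obtain X0 Y0 f g h where X0: "X0 \<in> U" and Y0: "Y0 \<in> V" and T: "(X0, So u, Y0, f, g, h) \<in> \<Delta>"
      using tt by blast
    have fh: "f \<in> hom C X0 (So u)" and gh: "g \<in> hom C (So u) Y0" using tri_homs[OF T] by auto
    have "\<exists>B0. iso_objs C Y0 (So B0)"
      using ext rot[OF T] iso_refl by blast
    then obtain B0 where iB: "iso_objs C Y0 (So B0)" by blast
    have B0: "B0 \<in> V" using b Viso[OF Y0 iB] by blast
    obtain \<phi> \<psi> where ph: "\<phi> \<in> hom C Y0 (So B0)" and ps: "\<psi> \<in> hom C (So B0) Y0"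
      and pp: "cmp C \<psi> \<phi> = idm C Y0"
      using iB unfolding iso_objs_def is_iso_def by blast
    have pg: "cmp C \<phi> g \<in> hom C (So u) (So B0)" by (rule comp_hom[OF gh ph])
    obtain k where k: "k \<in> hom C u B0" and pk: "cmp C \<phi> g = Sm k" using Sm_surj[OF pg] by blast
    have "k = mzero C u B0" using hvD[OF u B0 k] .
    hence pg0: "cmp C \<phi> g = mzero C (So u) (So B0)" using pk Sm_zero by simp
    have "g = cmp C (cmp C \<psi> \<phi>) g" using pp id_l[OF gh] by simp
    also have "\<dots> = cmp C \<psi> (cmp C \<phi> g)" using assoc[OF gh ph ps] by simp
    also have "\<dots> = mzero C (So u) Y0" using pg0 comp_zero_r[OF ps] by simp
    finally have g0: "g = mzero C (So u) Y0" .
    have "cmp C g (idm C (So u)) = mzero C (So u) Y0" using id_r[OF gh] g0 by simp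
    then obtain s where s: "s \<in> hom C (So u) X0" and fs: "cmp C f s = idm C (So u)"
      using CovEx[OF T id_hom] by blast
    show "So u \<in> U" by (rule retract[OF addU X0 s fh fs])
  qed
  have cd: "\<forall>A B f. V_monic C V A B f \<longrightarrow> V_monic C V (So A) (So B) (Sm f)"
    if c: "hom_vanish C (So ` U) V"
  proof (intro allI impI)
    fix A B f assume vm: "V_monic C V A B f"
    have fh: "f \<in> hom C A B" using vm unfolding V_monic_def by blast
    have vm2: "\<And>Y g. Y \<in> V \<Longrightarrow> g \<in> hom C A Y \<Longrightarrow> \<exists>h\<in>hom C B Y. cmp C h f = g"
      using vm unfolding V_monic_def by blast
    show "V_monic C V (So A) (So B) (Sm f)"
      unfolding V_monic_def
    proof (intro conjI ballI)
      show "Sm f \<in> hom C (So A) (So B)" by (rule Sm_hom[OF fh])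
      fix Y g assume Y: "Y \<in> V" and g: "g \<in> hom C (So A) Y"
      obtain X0 Y0 \<alpha> \<beta> \<gamma> where X0: "X0 \<in> U" and Y0: "Y0 \<in> V" and T: "(X0, A, Y0, \<alpha>, \<beta>, \<gamma>) \<in> \<Delta>"
        using tt by blast
      have ah: "\<alpha> \<in> hom C X0 A" and bh: "\<beta> \<in> hom C A Y0" using tri_homs[OF T] by auto
      have Sa: "Sm \<alpha> \<in> hom C (So X0) (So A)" by (rule Sm_hom[OF ah])
      have Sb: "Sm \<beta> \<in> hom C (So A) (So Y0)" by (rule Sm_hom[OF bh])
      have "cmp C g (Sm \<alpha>) \<in> hom C (So X0) Y" by (rule comp_hom[OF Sa g])
      hence "cmp C g (Sm \<alpha>) = mzero C (So X0) Y" using c X0 Y unfolding hom_vanish_def by blast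
      hence "cmp C g (mneg C (Sm \<alpha>)) = mzero C (So X0) Y" using comp_neg_r[OF Sa g] neg_zero by simp
      then obtain c where ch: "c \<in> hom C (So Y0) Y" and cb: "cmp C c (mneg C (Sm \<beta>)) = g"
        using ContraEx[OF rot3[OF T] g] by blast
      obtain h0 where h0: "h0 \<in> hom C B Y0" and hf: "cmp C h0 f = \<beta>" using vm2[OF Y0 bh] by blast
      have Sh0: "Sm h0 \<in> hom C (So B) (So Y0)" by (rule Sm_hom[OF h0])
      have ch0: "cmp C c (Sm h0) \<in> hom C (So B) Y" by (rule comp_hom[OF Sh0 ch])
      define h where "h = mneg C (cmp C c (Sm h0))"
      have hh: "h \<in> hom C (So B) Y" unfolding h_def by (rule neg_hom[OF ch0])
      have "cmp C h (Sm f) = mneg C (cmp C (cmp C c (Sm h0)) (Sm f))"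
        unfolding h_def by (rule comp_neg_l[OF Sm_hom[OF fh] ch0])
      also have "\<dots> = mneg C (cmp C c (cmp C (Sm h0) (Sm f)))"
        using assoc[OF Sm_hom[OF fh] Sh0 ch] by simp
      also have "\<dots> = mneg C (cmp C c (Sm \<beta>))" using Sm_comp[OF fh h0] hf by simp
      also have "\<dots> = g" using cb comp_neg_r[OF Sb ch] by simp
      finally show "\<exists>h\<in>hom C (So B) Y. cmp C h (Sm f) = g" using hh by blast
    qed
  qed
  have dc: "hom_vanish C (So ` U) V"
    if d: "\<forall>A B f. V_monic C V A B f \<longrightarrow> V_monic C V (So A) (So B) (Sm f)"
    unfolding hom_vanish_def
  proof (intro ballI)
    fix X Y assume X: "X \<in> So ` U" and Y: "Y \<in> V"
    then obtain u where u: "u \<in> U" and Xu: "X = So u" by blast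
    obtain Z where Z: "is_zero_obj C Z" using zero_ex by blast
    have "V_monic C V u Z (mzero C u Z)"
      unfolding V_monic_def
    proof (intro conjI ballI)
      show "mzero C u Z \<in> hom C u Z" by (rule zero_hom)
      fix Y' g assume Y': "Y' \<in> V" and g: "g \<in> hom C u Y'"
      have "cmp C (mzero C Z Y') (mzero C u Z) = g" using comp_zero_l[OF zero_hom] hvD[OF u Y' g] by simp
      thus "\<exists>h\<in>hom C Z Y'. cmp C h (mzero C u Z) = g" using zero_hom by blast
    qed
    hence vm: "V_monic C V (So u) (So Z) (Sm (mzero C u Z))" using d by blast
    show "hom C X Y = {mzero C X Y}"
    proof
      show "{mzero C X Y} \<subseteq> hom C X Y" using zero_hom by blast
      show "hom C X Y \<subseteq> {mzero C X Y}"
      proof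
        fix f assume f: "f \<in> hom C X Y"
        then obtain h where h: "h \<in> hom C (So Z) Y" and hf: "cmp C h (Sm (mzero C u Z)) = f"
          using vm Y Xu unfolding V_monic_def by blast
        have "f = mzero C X Y" using hf Sm_zero comp_zero_r[OF h] Xu by simp
        thus "f \<in> {mzero C X Y}" by simp
      qed
    qed
  qed
  show ?thesis using ac cb ba cd dc by blast
qed

end

theorem mainTheorem11:
  fixes C :: "('o,'m) addcat" and So :: "'o \<Rightarrow> 'o" and Sm :: "'m \<Rightarrow> 'm"
    and \<Delta> :: "('o,'m) tri set" and U V :: "'o set"
  assumes "right_triangulated C So Sm \<Delta>"
    and "right_semi_equivalence C So Sm \<Delta>"
    and "torsion_pair C So \<Delta> U V"
  shows "((\<forall>X\<in>U. So X \<in> U) \<longleftrightarrow> (\<forall>X. So X \<in> V \<longrightarrow> X \<in> V))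
       \<and> ((\<forall>X. So X \<in> V \<longrightarrow> X \<in> V) \<longleftrightarrow> hom_vanish C (So ` U) V)
       \<and> (hom_vanish C (So ` U) V \<longleftrightarrow>
            (\<forall>A B f. V_monic C V A B f \<longrightarrow> V_monic C V (So A) (So B) (Sm f)))"
proof -
  have pa: "is_preadditive C"
    using assms(1) unfolding right_triangulated_def is_additive_def by blast
  have ff: "\<forall>A B. bij_betw Sm (hom C A B) (hom C (So A) (So B))"
    using assms(2) unfolding right_semi_equivalence_def by (elim conjE) assumption
  have ext: "\<forall>A B D x y z. (A, B, D, x, y, z) \<in> \<Delta> \<longrightarrow>
        (\<exists>A0. iso_objs C A (So A0)) \<longrightarrow> (\<exists>D0. iso_objs C D (So D0)) \<longrightarrow>
        (\<exists>B0. iso_objs C B (So B0))"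
    using assms(2) unfolding right_semi_equivalence_def by (elim conjE) assumption
  interpret rtri C So Sm \<Delta>
    by (unfold_locales; fact pa assms(1) ff)
  show ?thesis by (rule main[OF ext assms(3)])
qed

end
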